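(* Let $n\ge1$ and $\mathbf{P}_A,\mathbf{P}_B,\mathbf{Q}_A,\mathbf{Q}_B\in\mathbb{R}^{n\times n}$ be symmetric positive definite. Let $\mathbf{x}\in\mathbb{R}^n$, $\mathbf{x}\neq\mathbf{0}$. The following three cases are mutually exclusive and collectively exhaustive: (1) $\mathbf{x}^\intercal\mathbf{H}_{\mathrm{SCI}}'(0)\mathbf{x}<0$; in this case $g(\mathbf{x})=\mathbf{x}^\intercal\mathbf{H}_{\mathrm{SCI}}(0)\mathbf{x}$. (2) $\mathbf{x}^\intercal\mathbf{H}_{\mathrm{SCI}}'(1)\mathbf{x}>0$; in this case $g(\mathbf{x})=\mathbf{x}^\intercal\mathbf{H}_{\mathrm{SCI}}(1)\mathbf{x}$. (3) There exists a unique $\omega_0\in[0,1]$ such that $\mathbf{x}^\intercal\mathbf{H}_{\mathrm{SCI}}'(\omega_0)\mathbf{x}=0$; in this case $g(\mathbf{x})=\mathbf{x}^\intercal\mathbf{H}_{\mathrm{SCI}}(\omega_0)\mathbf{x}$.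
   Context: $\mathbf{C}_A=\mathbf{P}_A+\mathbf{Q}_A$, $\mathbf{C}_B=\mathbf{P}_B+\mathbf{Q}_B$. For $\omega\in[0,1]$, $\bar\omega=1-\omega$, let $\mathbf{H}_{\mathrm{SCI}}(\omega)=\omega(\mathbf{P}_A+\omega\mathbf{Q}_A)^{-1}+\bar\omega(\mathbf{P}_B+\bar\omega\mathbf{Q}_B)^{-1}$ and $\mathbf{H}_{\mathrm{SCI}}'$ its derivative with respect to $\omega$. $\mathcal{A}_{\mathrm{Split}}=\{\mathbf{M}\in\mathbb{R}^{n\times n} : \begin{bmatrix}\mathbf{P}_A & \mathbf{M}\\ \mathbf{M}^\intercal & \mathbf{P}_B\end{bmatrix}\succeq 0\}$. For $\mathbf{K}=(\mathbf{K}_A,\mathbf{K}_B)$, $\mathbf{C}_F(\mathbf{K},\mathbf{P}_{AB})=\mathbf{K}_A\mathbf{C}_A\mathbf{K}_A^\intercal+\mathbf{K}_A\mathbf{P}_{AB}\mathbf{K}_B^\intercal+\mathbf{K}_B\mathbf{P}_{AB}^\intercal\mathbf{K}_A^\intercal+\mathbf{K}_B\mathbf{C}_B\mathbf{K}_B^\intercal$. For $\mathbf{P}_{AB}\in\mathcal{A}_{\mathrm{Split}}$ let $\mathbf{R}=\mathbf{C}_A+\mathbf{C}_B-\mathbf{P}_{AB}-\mathbf{P}_{AB}^\intercal$, $\mathbf{K}_A^*=(\mathbf{C}_B-\mathbf{P}_{AB}^\intercal)\mathbf{R}^{-1}$, $\mathbf{C}_F^*(\mathbf{P}_{AB})=\mathbf{C}_F((\mathbf{K}_A^*,\mathbf{I}-\mathbf{K}_A^*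 ),\mathbf{P}_{AB})$ and $\mathbf{M}_F^*(\mathbf{P}_{AB})=\mathbf{C}_F^*(\mathbf{P}_{AB})^{-1}$. Define $g(\mathbf{x})=\min_{\mathbf{P}_{AB}\in\mathcal{A}_{\mathrm{Split}}}\mathbf{x}^\intercal\mathbf{M}_F^*(\mathbf{P}_{AB})\mathbf{x}$. *)

theory Defs
  imports "HOL-Analysis.Analysis"
begin

type_synonym 'n mat = "real ^ 'n ^ 'n"

definition sym_pos_def :: "'n::finite mat \<Rightarrow> bool" where
  "sym_pos_def P \<longleftrightarrow> transpose P = P \<and> (\<forall>x. x \<noteq> 0 \<longrightarrow> x \<bullet> (P *v x) > 0)"

definition psd :: "'m::finite mat \<Rightarrow> bool" where
  "psd M \<longleftrightarrow> transpose M = M \<and> (\<forall>z. z \<bullet> (M *v z) \<ge> 0)"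

definition block :: "'n::finite mat \<Rightarrow> 'n mat \<Rightarrow> 'n mat \<Rightarrow> 'n mat \<Rightarrow> real ^ ('n + 'n) ^ ('n + 'n)" where
  "block A B C D = (\<chi> i j. case i of
      Inl i' \<Rightarrow> (case j of Inl j' \<Rightarrow> A $ i' $ j' | Inr j' \<Rightarrow> B $ i' $ j')
    | Inr i' \<Rightarrow> (case j of Inl j' \<Rightarrow> C $ i' $ j' | Inr j' \<Rightarrow> D $ i' $ j'))"

definition H_SCI :: "'n::finite mat \<Rightarrow> 'n mat \<Rightarrow> 'n mat \<Rightarrow> 'n mat \<Rightarrow> real \<Rightarrow> 'n mat" where
  "H_SCI PA QA PB QB w =
     w *\<^sub>R matrix_inv (PA + w *\<^sub>R QA) + (1 - w) *\<^sub>R matrix_inv (PB + (1 - w) *\<^sub>R QB)"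

definition H_SCI' :: "'n::finite mat \<Rightarrow> 'n mat \<Rightarrow> 'n mat \<Rightarrow> 'n mat \<Rightarrow> real \<Rightarrow> 'n mat" where
  "H_SCI' PA QA PB QB w = vector_derivative (H_SCI PA QA PB QB) (at w)"

definition A_Split :: "'n::finite mat \<Rightarrow> 'n mat \<Rightarrow> 'n mat set" where
  "A_Split PA PB = {M. psd (block PA M (transpose M) PB)}"

definition C_F :: "'n::finite mat \<Rightarrow> 'n mat \<Rightarrow> 'n mat \<Rightarrow> 'n mat \<Rightarrow> 'n mat \<Rightarrow> 'n mat" where
  "C_F CA CB KA KB PAB =
     KA ** CA ** transpose KA + KA ** PAB ** transpose KB
     + KB ** transpose PAB ** transpose KA + KB ** CB ** transpose KB"

definition C_F_opt :: "'n::finite mat \<Rightarrow> 'n mat \<Rightarrow> 'n mat \<Rightarrow> 'n mat" where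
  "C_F_opt CA CB PAB =
    (let R = CA + CB - PAB - transpose PAB;
         KA = (CB - transpose PAB) ** matrix_inv R
     in C_F CA CB KA (mat 1 - KA) PAB)"

definition M_F_opt :: "'n::finite mat \<Rightarrow> 'n mat \<Rightarrow> 'n mat \<Rightarrow> 'n mat" where
  "M_F_opt CA CB PAB = matrix_inv (C_F_opt CA CB PAB)"

text \<open>g(x) = min over P_AB in A_Split of x^T M_F^*(P_AB) x (rendered as the infimum).\<close>
definition g_fun :: "'n::finite mat \<Rightarrow> 'n mat \<Rightarrow> 'n mat \<Rightarrow> 'n mat \<Rightarrow> real ^ 'n \<Rightarrow> real" where
  "g_fun PA QA PB QB x =
     Inf ((\<lambda>PAB. x \<bullet> (M_F_opt (PA + QA) (PB + QB) PAB *v x)) ` A_Split PA PB)"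

end

theory Submission
  imports Defs
begin

declare transpose_matrix_vector[simp del] vector_transpose_matrix[simp del]


lemma minv: fixes A :: "real^'n::finite^'n" assumes "invertible A"
  shows "A ** matrix_inv A = mat 1" "matrix_inv A ** A = mat 1"
proof -
  have "\<exists>A'. A ** A' = mat 1 \<and> A' ** A = mat 1" using assms unfolding invertible_def by blast
  then have "A ** matrix_inv A = mat 1 \<and> matrix_inv A ** A = mat 1"
    unfolding matrix_inv_def by (rule someI_ex)
  then show "A ** matrix_inv A = mat 1" "matrix_inv A ** A = mat 1" by auto
qed

lemma minv_v: fixes A :: "real^'n::finite^'n" assumes "invertible A"
  shows "A *v (matrix_inv A *v x) = x" "matrix_inv A *v (A *v x) = x"
  by (simp_all add: matrix_vector_mul_assoc minv[OF assms])

lemma minv_unique: fixes A :: "real^'n::finite^'n" assumes "invertible A" "B ** A = mat 1"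
  shows "matrix_inv A = B"
proof -
  have "B = B ** (A ** matrix_inv A)" by (simp add: minv[OF assms(1)])
  also have "\<dots> = matrix_inv A" by (simp add: matrix_mul_assoc assms(2))
  finally show ?thesis by simp
qed

lemma ker_invertible: fixes A :: "real^'n::finite^'n"
  assumes "\<And>x. A *v x = 0 \<Longrightarrow> x = 0" shows "invertible A"
  using assms invertible_left_inverse matrix_left_invertible_ker by blast

lemma transpose_add: "transpose (A + B) = transpose A + transpose (B::real^'n::finite^'n)"
  by (simp add: transpose_def vec_eq_iff)
lemma transpose_diff: "transpose (A - B) = transpose A - transpose (B::real^'n::finite^'n)"
  by (simp add: transpose_def vec_eq_iff)
lemma transpose_uminus: "transpose (- A) = - transpose (A::real^'n::finite^'n)"
  by (simp add: transpose_def vec_eq_iff)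

lemma dot_mv: "u \<bullet> (A *v w) = (transpose A *v u) \<bullet> (w::real^'n::finite)"
  for A :: "real^'n^'n"
  by (simp add: dot_lmul_matrix[symmetric] transpose_matrix_vector)

lemma dot_mv_sym: "transpose A = A \<Longrightarrow> u \<bullet> (A *v w) = w \<bullet> (A *v (u::real^'n::finite))"
  for A :: "real^'n^'n"
  by (metis dot_mv inner_commute)

lemma minv_sym: fixes A :: "real^'n::finite^'n" assumes "invertible A" "transpose A = A"
  shows "transpose (matrix_inv A) = matrix_inv A"
proof -
  have "transpose (matrix_inv A) ** A = transpose (A ** matrix_inv A)"
    by (simp add: matrix_transpose_mul assms(2))
  also have "\<dots> = mat 1" by (simp add: minv(1)[OF assms(1)])
  finally have "transpose (matrix_inv A) ** A = mat 1" .
  then show ?thesis using minv_unique[OF assms(1)] by metis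
qed

lemma pd_inv: assumes "sym_pos_def P" shows "invertible P"
proof (rule ker_invertible)
  fix x assume "P *v x = 0"
  then have "x \<bullet> (P *v x) = 0" by simp
  then show "x = 0" using assms unfolding sym_pos_def_def by force
qed

lemma scaleR_mv: "((k::real) *\<^sub>R A) *v x = k *\<^sub>R (A *v x)"
  for A :: "real^'n::finite^'n"
  by (simp add: vec_eq_iff matrix_vector_mult_def sum_distrib_left mult.assoc)

lemma pd_comb: assumes "sym_pos_def P" "sym_pos_def Q" "(w::real) \<ge> 0"
  shows "sym_pos_def (P + w *\<^sub>R Q)"
proof -
  have "x \<bullet> ((P + w *\<^sub>R Q) *v x) > 0" if "x \<noteq> 0" for x
  proof -
    have "x \<bullet> ((P + w *\<^sub>R Q) *v x) = x \<bullet> (P *v x) + w * (x \<bullet> (Q *v x))"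
      by (simp add: matrix_vector_mult_add_rdistrib scaleR_mv inner_add_right)
    moreover have "x \<bullet> (P *v x) > 0" "x \<bullet> (Q *v x) > 0" using assms that unfolding sym_pos_def_def by auto
    ultimately show ?thesis using assms(3) by (simp add: add_pos_nonneg)
  qed
  moreover have "transpose (P + w *\<^sub>R Q) = P + w *\<^sub>R Q"
    using assms(1,2)[unfolded sym_pos_def_def, THEN conjunct1] by (simp add: transpose_add transpose_scalar)
  ultimately show ?thesis unfolding sym_pos_def_def by blast
qed

definition vjoin :: "real^'n::finite \<Rightarrow> real^'n \<Rightarrow> real^('n+'n)" where
  "vjoin v w = (\<chi> i. case i of Inl a \<Rightarrow> v$a | Inr b \<Rightarrow> w$b)"

lemma sum_UNIV_Plus: "sum f (UNIV :: ('a::finite+'b::finite) set) = sum (\<lambda>a. f (Inl a)) UNIV + sum (\<lambda>b. f (Inr b)) UNIV"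
proof -
  have "sum f (UNIV :: ('a+'b) set) = sum f (UNIV <+> UNIV)" by simp
  also have "\<dots> = sum (\<lambda>a. f (Inl a)) UNIV + sum (\<lambda>b. f (Inr b)) UNIV"
    by (subst sum.Plus) (auto simp: o_def)
  finally show ?thesis .
qed

lemma vjoin_inner: "vjoin a b \<bullet> vjoin c d = a \<bullet> c + b \<bullet> d"
  unfolding inner_vec_def vjoin_def by (subst sum_UNIV_Plus) simp

lemma block_mv:
  fixes A B C D :: "real^'n::finite^'n"
  shows "block A B C D *v vjoin v w = vjoin (A *v v + B *v w) (C *v v + D *v w)"
proof -
  have "(block A B C D *v vjoin v w) $ i = vjoin (A *v v + B *v w) (C *v v + D *v w) $ i" for i
  proof (cases i)
    case (Inl a)
    have "(block A B C D *v vjoin v w) $ i = (\<Sum>j\<in>UNIV. block A B C D $ i $ j * vjoin v w $ j)"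
      by (simp add: matrix_vector_mult_def)
    also have "\<dots> = (\<Sum>j\<in>UNIV. A $ a $ j * v $ j) + (\<Sum>j\<in>UNIV. B $ a $ j * w $ j)"
      by (subst sum_UNIV_Plus) (simp add: block_def vjoin_def Inl)
    also have "\<dots> = vjoin (A *v v + B *v w) (C *v v + D *v w) $ i"
      by (simp add: vjoin_def Inl matrix_vector_mult_def)
    finally show ?thesis .
  next
    case (Inr a)
    have "(block A B C D *v vjoin v w) $ i = (\<Sum>j\<in>UNIV. block A B C D $ i $ j * vjoin v w $ j)"
      by (simp add: matrix_vector_mult_def)
    also have "\<dots> = (\<Sum>j\<in>UNIV. C $ a $ j * v $ j) + (\<Sum>j\<in>UNIV. D $ a $ j * w $ j)"
      by (subst sum_UNIV_Plus) (simp add: block_def vjoin_def Inr)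
    also have "\<dots> = vjoin (A *v v + B *v w) (C *v v + D *v w) $ i"
      by (simp add: vjoin_def Inr matrix_vector_mult_def)
    finally show ?thesis .
  qed
  then show ?thesis by (simp add: vec_eq_iff)
qed

lemma block_qf:
  fixes A B C D :: "real^'n::finite^'n"
  shows "vjoin v w \<bullet> (block A B C D *v vjoin v w) =
    v \<bullet> (A *v v) + v \<bullet> (B *v w) + w \<bullet> (C *v v) + w \<bullet> (D *v w)"
  by (simp add: block_mv vjoin_inner inner_add_right)

lemma vjoin_surj: "z = vjoin (\<chi> a. z $ Inl a) (\<chi> b. z $ Inr b)"
  by (simp add: vjoin_def vec_eq_iff split: sum.split)

lemma block_transpose:
  fixes A B C D :: "real^'n::finite^'n"
  shows "transpose (block A B C D) = block (transpose A) (transpose C) (transpose B) (transpose D)"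
  by (simp add: vec_eq_iff transpose_def block_def split: sum.split)

definition qJ :: "real^'n::finite^'n \<Rightarrow> real^'n^'n \<Rightarrow> real^'n^'n \<Rightarrow> real^'n \<Rightarrow> real^'n \<Rightarrow> real" where
  "qJ CA CB M t s = t \<bullet> (CA *v t) + 2 * (t \<bullet> (M *v s)) + s \<bullet> (CB *v s)"

lemma dot_transpose_swap: "w \<bullet> (transpose M *v v) = v \<bullet> (M *v w)"
  for M :: "real^'n::finite^'n"
  by (metis dot_mv inner_commute transpose_transpose)

lemma split_psd:
  fixes PA PB M :: "real^'n::finite^'n"
  assumes "M \<in> A_Split PA PB"
  shows "v \<bullet> (PA *v v) + 2 * (v \<bullet> (M *v w)) + w \<bullet> (PB *v w) \<ge> 0"
proof -
  have "vjoin v w \<bullet> (block PA M (transpose M) PB *v vjoin v w) \<ge> 0"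
    using assms unfolding A_Split_def psd_def by blast
  then show ?thesis by (simp add: block_qf dot_transpose_swap)
qed

lemma pd_nonneg: "sym_pos_def P \<Longrightarrow> z \<bullet> (P *v z) \<ge> 0"
  unfolding sym_pos_def_def by (cases "z = 0") (auto intro: less_imp_le)

lemma pd_pos: "sym_pos_def P \<Longrightarrow> z \<noteq> 0 \<Longrightarrow> z \<bullet> (P *v z) > 0"
  unfolding sym_pos_def_def by auto

lemma pd_sym: "sym_pos_def P \<Longrightarrow> transpose P = P"
  unfolding sym_pos_def_def by auto

lemma mv_neg: "A *v (- z) = - (A *v z)" for A :: "real^'n::finite^'n"
  by (simp add: vec_eq_iff matrix_vector_mult_def sum_negf)

lemma R_pd:
  fixes PA PB QA QB M :: "real^'n::finite^'n"
  assumes "sym_pos_def PA" "sym_pos_def PB" "sym_pos_def QA" "sym_pos_def QB" "M \<in> A_Split PA PB"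
  shows "sym_pos_def ((PA + QA) + (PB + QB) - M - transpose M)"
proof -
  let ?R = "(PA + QA) + (PB + QB) - M - transpose M"
  have "transpose ?R = (PA + QA) + (PB + QB) - transpose M - M"
    using pd_sym[OF assms(1)] pd_sym[OF assms(2)] pd_sym[OF assms(3)] pd_sym[OF assms(4)]
    by (simp add: transpose_add transpose_diff)
  also have "\<dots> = ?R" by (simp add: algebra_simps)
  finally have sym: "transpose ?R = ?R" .
  have "z \<bullet> (?R *v z) > 0" if "z \<noteq> 0" for z
  proof -
    have t: "z \<bullet> (transpose M *v z) = z \<bullet> (M *v z)" by (simp add: dot_transpose_swap)
    have e1: "z \<bullet> (?R *v z) = z \<bullet> (PA *v z) + z \<bullet> (QA *v z) + z \<bullet> (PB *v z) + z \<bullet> (QB *v z) - 2 * (z \<bullet> (M *v z))"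
      by (simp add: matrix_vector_mult_add_rdistrib matrix_vector_mult_diff_rdistrib inner_add_right inner_diff_right t)
    have "z \<bullet> (PA *v z) + 2 * (z \<bullet> (M *v (-z))) + (-z) \<bullet> (PB *v (-z)) \<ge> 0"
      by (rule split_psd[OF assms(5)])
    then have "z \<bullet> (PA *v z) - 2 * (z \<bullet> (M *v z)) + z \<bullet> (PB *v z) \<ge> 0"
      by (simp add: mv_neg)
    moreover have "z \<bullet> (QA *v z) > 0" "z \<bullet> (QB *v z) > 0" using assms(3,4) that by (auto intro: pd_pos)
    ultimately show ?thesis using e1 by linarith
  qed
  then show ?thesis using sym unfolding sym_pos_def_def by blast
qed

lemma Phi_props:
  fixes PA PB QA QB M :: "real^'n::finite^'n" and x :: "real^'n"
  assumes pA: "sym_pos_def PA" and pB: "sym_pos_def PB" and qA: "sym_pos_def QA" and qB: "sym_pos_def QB"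
    and MS: "M \<in> A_Split PA PB"
  shows "\<And>t s. 2 * (x \<bullet> (t + s)) - qJ (PA + QA) (PB + QB) M t s \<le> x \<bullet> (M_F_opt (PA + QA) (PB + QB) M *v x)"
    and "\<And>t s. (PA + QA) *v t + M *v s = x \<Longrightarrow> transpose M *v t + (PB + QB) *v s = x \<Longrightarrow>
           x \<bullet> (M_F_opt (PA + QA) (PB + QB) M *v x) = x \<bullet> (t + s)"
proof -
  define CA where "CA = PA + QA"
  define CB where "CB = PB + QB"
  define R where "R = CA + CB - M - transpose M"
  define NR where "NR = matrix_inv R"
  define KA where "KA = (CB - transpose M) ** NR"
  define KB where "KB = mat 1 - KA"
  define C where "C = C_F CA CB KA KB M"
  have Cdef: "C_F_opt (PA + QA) (PB + QB) M = C"
    unfolding C_F_opt_def Let_def C_def KB_def KA_def NR_def R_def CA_def CB_def by simp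
  have MF: "M_F_opt (PA + QA) (PB + QB) M = matrix_inv C"
    unfolding M_F_opt_def Cdef ..
  have symCA: "transpose CA = CA" unfolding CA_def
    using pd_sym[OF pA] pd_sym[OF qA] by (simp add: transpose_add)
  have symCB: "transpose CB = CB" unfolding CB_def
    using pd_sym[OF pB] pd_sym[OF qB] by (simp add: transpose_add)
  have Rpd: "sym_pos_def R" unfolding R_def CA_def CB_def by (rule R_pd[OF pA pB qA qB MS])
  have invR: "invertible R" by (rule pd_inv[OF Rpd])
  have symR: "transpose R = R" by (rule pd_sym[OF Rpd])
  have symNR: "transpose NR = NR" unfolding NR_def by (rule minv_sym[OF invR symR])
  have KAt: "transpose KA = NR ** (CB - M)"
    unfolding KA_def by (simp add: matrix_transpose_mul symNR transpose_diff symCB)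
  have KBt: "transpose KB = mat 1 - transpose KA"
    unfolding KB_def by (simp add: transpose_diff)
  define a where "a = (\<lambda>v. transpose KA *v v)"
  have bv: "transpose KB *v v = v - a v" for v
    unfolding KBt a_def by (simp add: matrix_vector_mult_diff_rdistrib)
  have Cv0: "C *v v = KA *v (CA *v a v + M *v (transpose KB *v v)) + KB *v (transpose M *v a v + CB *v (transpose KB *v v))" for v
    unfolding C_def C_F_def a_def
    by (simp add: matrix_vector_mult_add_rdistrib matrix_vector_right_distrib matrix_vector_mul_assoc[symmetric])
  have Cv: "C *v v = KA *v (CA *v a v + M *v (v - a v)) + KB *v (transpose M *v a v + CB *v (v - a v))" for v
    using Cv0[of v] unfolding bv .
  have dKA: "v \<bullet> (KA *v u) = a v \<bullet> u" for v u unfolding a_def by (rule dot_mv)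
  have dKB: "v \<bullet> (KB *v u) = (v - a v) \<bullet> u" for v u using dot_mv[of v KB u] bv by simp
  have quad: "v \<bullet> (C *v v) = qJ CA CB M (a v) (v - a v)" for v
    unfolding Cv qJ_def
    by (simp add: inner_add_right dKA dKB dot_transpose_swap)
  have Ra: "R *v a v = (CB - M) *v v" for v
  proof -
    have "a v = NR *v ((CB - M) *v v)" unfolding a_def KAt by (simp add: matrix_vector_mul_assoc)
    then show ?thesis unfolding NR_def using minv_v(1)[OF invR] by simp
  qed
  have qid: "qJ CA CB M t (v - t) = t \<bullet> (R *v t) - 2 * (t \<bullet> ((CB - M) *v v)) + v \<bullet> (CB *v v)" for t v
  proof -
    have s1: "v \<bullet> (CB *v t) = t \<bullet> (CB *v v)" by (rule dot_mv_sym[OF symCB])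
    have s2: "t \<bullet> (transpose M *v t) = t \<bullet> (M *v t)" by (simp add: dot_transpose_swap)
    have m1: "t \<bullet> (M *v (v - t)) = t \<bullet> (M *v v) - t \<bullet> (M *v t)"
      by (simp add: matrix_vector_mult_diff_distrib inner_diff_right)
    have m2: "(v - t) \<bullet> (CB *v (v - t)) = v \<bullet> (CB *v v) - 2 * (t \<bullet> (CB *v v)) + t \<bullet> (CB *v t)"
      by (simp add: matrix_vector_mult_diff_distrib inner_diff_right inner_diff_left s1)
    have m3: "t \<bullet> (R *v t) = t \<bullet> (CA *v t) + t \<bullet> (CB *v t) - 2 * (t \<bullet> (M *v t))"
      unfolding R_def by (simp add: matrix_vector_mult_add_rdistrib matrix_vector_mult_diff_rdistrib
          inner_add_right inner_diff_right s2)
    have m4: "t \<bullet> ((CB - M) *v v) = t \<bullet> (CB *v v) - t \<bullet> (M *v v)"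
      by (simp add: matrix_vector_mult_diff_rdistrib inner_diff_right)
    show ?thesis unfolding qJ_def m1 m2 m3 m4 by simp
  qed
  have Rpsd: "z \<bullet> (R *v z) \<ge> 0" for z by (rule pd_nonneg[OF Rpd])
  have qmin: "qJ CA CB M (a v) (v - a v) \<le> qJ CA CB M t (v - t)" for t v
  proof -
    have ta: "a v \<bullet> (R *v t) = t \<bullet> (R *v a v)" by (rule dot_mv_sym[OF symR])
    have "(t - a v) \<bullet> (R *v (t - a v)) = t \<bullet> (R *v t) - 2 * (t \<bullet> (R *v a v)) + a v \<bullet> (R *v a v)"
      by (simp add: inner_diff_left inner_diff_right matrix_vector_mult_diff_distrib ta)
    moreover have "qJ CA CB M t (v - t) - qJ CA CB M (a v) (v - a v) =
        t \<bullet> (R *v t) - 2 * (t \<bullet> (R *v a v)) + 2 * (a v \<bullet> (R *v a v)) - a v \<bullet> (R *v a v)"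
      unfolding qid Ra by simp
    ultimately show ?thesis using Rpsd[of "t - a v"] by linarith
  qed
  have qpos: "qJ CA CB M u w \<ge> u \<bullet> (QA *v u) + w \<bullet> (QB *v w)" for u w
  proof -
    have "qJ CA CB M u w = (u \<bullet> (PA *v u) + 2 * (u \<bullet> (M *v w)) + w \<bullet> (PB *v w)) + u \<bullet> (QA *v u) + w \<bullet> (QB *v w)"
      unfolding qJ_def CA_def CB_def by (simp add: matrix_vector_mult_add_rdistrib inner_add_right)
    then show ?thesis using split_psd[OF MS, of u w] by linarith
  qed
  have Cpsd: "z \<bullet> (C *v z) \<ge> 0" for z
    using quad[of z] qpos[of "a z" "z - a z"] pd_nonneg[OF qA, of "a z"] pd_nonneg[OF qB, of "z - a z"] by linarith
  have invC: "invertible C"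
  proof (rule ker_invertible)
    fix v assume "C *v v = 0"
    then have "qJ CA CB M (a v) (v - a v) = 0" using quad[of v] by simp
    then have "a v \<bullet> (QA *v a v) + (v - a v) \<bullet> (QB *v (v - a v)) \<le> 0" using qpos[of "a v" "v - a v"] by linarith
    then have "a v = 0" "v - a v = 0"
      using pd_nonneg[OF qA, of "a v"] pd_nonneg[OF qB, of "v - a v"] pd_pos[OF qA, of "a v"] pd_pos[OF qB, of "v - a v"]
      by (smt (verit))+
    then show "v = 0" by simp
  qed
  have tr3: "transpose (X ** Y ** transpose Z) = Z ** transpose Y ** transpose X" for X Y Z :: "real^'n^'n"
    by (simp add: matrix_transpose_mul matrix_mul_assoc)
  have symC: "transpose C = C"
    unfolding C_def C_F_def transpose_add tr3 symCA symCB transpose_transpose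
    by (simp only: add_ac)
  show "\<And>t s. 2 * (x \<bullet> (t + s)) - qJ (PA + QA) (PB + QB) M t s \<le> x \<bullet> (M_F_opt (PA + QA) (PB + QB) M *v x)"
  proof -
    fix t s :: "real^'n"
    define v where "v = t + s"
    define w where "w = matrix_inv C *v x"
    have Cw: "C *v w = x" unfolding w_def by (rule minv_v(1)[OF invC])
    have "0 \<le> (w - v) \<bullet> (C *v (w - v))" by (rule Cpsd)
    also have "\<dots> = w \<bullet> (C *v w) - w \<bullet> (C *v v) - v \<bullet> (C *v w) + v \<bullet> (C *v v)"
      by (simp add: inner_diff_left inner_diff_right matrix_vector_mult_diff_distrib)
    also have "\<dots> = x \<bullet> w - 2 * (x \<bullet> v) + v \<bullet> (C *v v)"
      using dot_mv_sym[OF symC, of w v] Cw by (simp add: inner_commute)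
    finally have 1: "2 * (x \<bullet> v) - v \<bullet> (C *v v) \<le> x \<bullet> w" by simp
    have "v \<bullet> (C *v v) \<le> qJ CA CB M t s"
      using quad[of v] qmin[of v t] unfolding v_def by simp
    then show "2 * (x \<bullet> (t + s)) - qJ (PA + QA) (PB + QB) M t s \<le> x \<bullet> (M_F_opt (PA + QA) (PB + QB) M *v x)"
      using 1 unfolding MF w_def[symmetric] v_def CA_def CB_def by simp
  qed
  show "\<And>t s. (PA + QA) *v t + M *v s = x \<Longrightarrow> transpose M *v t + (PB + QB) *v s = x \<Longrightarrow>
           x \<bullet> (M_F_opt (PA + QA) (PB + QB) M *v x) = x \<bullet> (t + s)"
  proof -
    fix t s :: "real^'n"
    assume e1: "(PA + QA) *v t + M *v s = x" and e2: "transpose M *v t + (PB + QB) *v s = x"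
    define v where "v = t + s"
    have r1: "R *v t = CA *v t + CB *v t - M *v t - transpose M *v t"
      unfolding R_def by (simp only: matrix_vector_mult_add_rdistrib matrix_vector_mult_diff_rdistrib)
    have r2: "(CB - M) *v v = CB *v t + CB *v s - M *v t - M *v s"
      unfolding v_def by (simp add: matrix_vector_mult_diff_rdistrib matrix_vector_right_distrib)
    have "R *v t - (CB - M) *v v = (CA *v t + M *v s) - (transpose M *v t + CB *v s)"
      unfolding r1 r2 by (simp add: algebra_simps)
    also have "\<dots> = 0" using e1 e2 unfolding CA_def CB_def by simp
    finally have "R *v t = (CB - M) *v v" by simp
    then have at: "a v = t" using Ra[of v] invR
      by (metis minv_v(2) NR_def)
    have "C *v v = KA *v x + KB *v x"
      unfolding Cv at using e1 e2 unfolding v_def CA_def CB_def by simp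
    also have "\<dots> = x" unfolding KB_def by (simp add: matrix_vector_mult_diff_rdistrib)
    finally have "matrix_inv C *v x = v" using minv_v(2)[OF invC, of v] by simp
    then show "x \<bullet> (M_F_opt (PA + QA) (PB + QB) M *v x) = x \<bullet> (t + s)" unfolding MF v_def by simp
  qed
qed


lemma cs_pd:
  fixes P :: "real^'n::finite^'n"
  assumes "sym_pos_def P"
  shows "(u \<bullet> (P *v y))^2 \<le> (u \<bullet> (P *v u)) * (y \<bullet> (P *v y))"
proof -
  define c where "c = y \<bullet> (P *v y)"
  define m where "m = u \<bullet> (P *v y)"
  define X where "X = u \<bullet> (P *v u)"
  have c0: "c \<ge> 0" unfolding c_def by (rule pd_nonneg[OF assms])
  have sy: "y \<bullet> (P *v u) = m" unfolding m_def by (rule dot_mv_sym[OF pd_sym[OF assms]])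
  have "0 \<le> (c *\<^sub>R u - m *\<^sub>R y) \<bullet> (P *v (c *\<^sub>R u - m *\<^sub>R y))" by (rule pd_nonneg[OF assms])
  also have "\<dots> = c * (c * X - m * m)"
    apply (simp add: inner_diff_left inner_diff_right matrix_vector_mult_diff_distrib matrix_vector_mult_scaleR
        sy flip: m_def c_def X_def)
    apply (algebra)?
    done
  finally have 1: "0 \<le> c * (c * X - m * m)" .
  show ?thesis
  proof (cases "c = 0")
    case True
    then have "y = 0" using pd_pos[OF assms, of y] unfolding c_def by force
    then show ?thesis by simp
  next
    case False
    then have "c > 0" using c0 by simp
    then have "0 \<le> c * X - m * m" using 1 by (simp add: zero_le_mult_iff)
    then show ?thesis unfolding c_def m_def X_def by (simp add: power2_eq_square algebra_simps)
  qed
qed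

lemma sc_ineq:
  fixes X Y s r a b g :: real
  assumes "0 \<le> X" "0 \<le> Y" "s^2 \<le> X * a" "r^2 \<le> Y * b" "0<a" "0<b" "a \<le> g" "b \<le> g"
  shows "0 \<le> X + 2 * (s * r/g) + Y"
proof -
  have g: "0 < g" using assms by linarith
  have 1: "s^2 * r^2 \<le> (X * a) * (Y * b)"
    by (rule mult_mono) (use assms in auto)
  have 2: "(X * a) * (Y * b) \<le> (X * g) * (Y * g)"
    by (rule mult_mono) (use assms in \<open>auto intro: mult_left_mono\<close>)
  have 3: "(g * (X+Y))^2 - 4 * ((X * g) * (Y * g)) = (g * (X-Y))^2" by algebra
  have "(2 * s * r)^2 = 4 * (s^2 * r^2)" by algebra
  also have "\<dots> \<le> 4 * ((X * g) * (Y * g))" using 1 2 by linarith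
  also have "\<dots> \<le> (g * (X+Y))^2" using 3 by (smt (verit) zero_le_power2)
  finally have "\<bar>2 * s * r\<bar>^2 \<le> (g * (X+Y))^2" by simp
  then have "\<bar>2 * s * r\<bar> \<le> g * (X+Y)"
    by (rule power2_le_imp_le) (use assms g in simp)
  then have "-(g * (X+Y)) \<le> 2 * s * r" by linarith
  then have "-(X+Y) \<le> (2 * s * r)/g" using g by (simp add: le_divide_eq algebra_simps)
  then show ?thesis by simp
qed

lemma h_formula:
  "x \<bullet> (H_SCI PA QA PB QB w *v x) =
     w * (x \<bullet> (matrix_inv (PA + w *\<^sub>R QA) *v x)) + (1 - w) * (x \<bullet> (matrix_inv (PB + (1 - w) *\<^sub>R QB) *v x))"
  for PA QA PB QB :: "real^'n::finite^'n"
  unfolding H_SCI_def by (simp add: matrix_vector_mult_add_rdistrib scaleR_mv inner_add_right)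

lemma solve_eq:
  fixes A :: "real^'n::finite^'n"
  assumes "sym_pos_def P" "sym_pos_def Q" "0 \<le> w"
  shows "(P + w *\<^sub>R Q) *v (matrix_inv (P + w *\<^sub>R Q) *v x) = x"
  by (rule minv_v(1)[OF pd_inv[OF pd_comb[OF assms]]])

lemma xy_eq:
  fixes P Q :: "real^'n::finite^'n"
  assumes "(P + w *\<^sub>R Q) *v y = x"
  shows "x \<bullet> y = y \<bullet> (P *v y) + w * (y \<bullet> (Q *v y))"
proof -
  have "x \<bullet> y = y \<bullet> ((P + w *\<^sub>R Q) *v y)" using assms by (simp add: inner_commute)
  also have "\<dots> = y \<bullet> (P *v y) + w * (y \<bullet> (Q *v y))"
    by (simp add: matrix_vector_mult_add_rdistrib scaleR_mv inner_add_right)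
  finally show ?thesis .
qed

lemma lower_sci:
  fixes PA PB QA QB M :: "real^'n::finite^'n" and x :: "real^'n"
  assumes pA: "sym_pos_def PA" and pB: "sym_pos_def PB" and qA: "sym_pos_def QA" and qB: "sym_pos_def QB"
    and MS: "M \<in> A_Split PA PB" and w: "0 \<le> w" "w \<le> 1"
  shows "x \<bullet> (H_SCI PA QA PB QB w *v x) \<le> x \<bullet> (M_F_opt (PA + QA) (PB + QB) M *v x)"
proof -
  define y1 where "y1 = matrix_inv (PA + w *\<^sub>R QA) *v x"
  define y2 where "y2 = matrix_inv (PB + (1 - w) *\<^sub>R QB) *v x"
  have e1: "(PA + w *\<^sub>R QA) *v y1 = x" unfolding y1_def by (rule solve_eq[OF pA qA w(1)])
  have e2: "(PB + (1 - w) *\<^sub>R QB) *v y2 = x" unfolding y2_def by (rule solve_eq[OF pB qB]) (use w in simp)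
  define a1 where "a1 = y1 \<bullet> (PA *v y1)"
  define q1 where "q1 = y1 \<bullet> (QA *v y1)"
  define a2 where "a2 = y2 \<bullet> (PB *v y2)"
  define q2 where "q2 = y2 \<bullet> (QB *v y2)"
  define m where "m = y1 \<bullet> (M *v y2)"
  have xy1: "x \<bullet> y1 = a1 + w * q1" unfolding a1_def q1_def by (rule xy_eq[OF e1])
  have xy2: "x \<bullet> y2 = a2 + (1 - w) * q2" unfolding a2_def q2_def by (rule xy_eq[OF e2])
  have h: "x \<bullet> (H_SCI PA QA PB QB w *v x) = w * (a1 + w * q1) + (1 - w) * (a2 + (1 - w) * q2)"
    unfolding h_formula y1_def[symmetric] y2_def[symmetric] xy1 xy2 ..
  define t where "t = w *\<^sub>R y1"
  define s where "s = (1 - w) *\<^sub>R y2"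
  have q: "qJ (PA + QA) (PB + QB) M t s = w * w * (a1 + q1) + 2 * (w * (1 - w) * m) + (1 - w) * (1 - w) * (a2 + q2)"
    unfolding qJ_def t_def s_def a1_def q1_def a2_def q2_def m_def
    by (simp add: matrix_vector_mult_scaleR matrix_vector_mult_add_rdistrib inner_add_right algebra_simps)
  have xts: "x \<bullet> (t + s) = w * (a1 + w * q1) + (1 - w) * (a2 + (1 - w) * q2)"
    unfolding t_def s_def by (simp add: inner_add_right xy1 xy2)
  have ps: "y1 \<bullet> (PA *v y1) + 2 * (y1 \<bullet> (M *v (- y2))) + (- y2) \<bullet> (PB *v (- y2)) \<ge> 0"
    by (rule split_psd[OF MS])
  then have ps': "a1 - 2 * m + a2 \<ge> 0" unfolding a1_def a2_def m_def by (simp add: mv_neg)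
  have "0 \<le> w * (1 - w) * (a1 - 2 * m + a2)" using w ps' by simp
  also have "\<dots> = 2 * (x \<bullet> (t + s)) - qJ (PA + QA) (PB + QB) M t s - x \<bullet> (H_SCI PA QA PB QB w *v x)"
    unfolding q xts h by algebra
  finally show ?thesis using Phi_props(1)[OF pA pB qA qB MS, of x t s] by linarith
qed


definition outer :: "real^'n::finite \<Rightarrow> real^'n \<Rightarrow> real^'n^'n" where
  "outer p q = (\<chi> i j. p$i * q$j)"

lemma outer_mv: "outer p q *v s = (q \<bullet> s) *\<^sub>R p"
  by (simp add: outer_def vec_eq_iff matrix_vector_mult_def inner_vec_def sum_distrib_left mult_ac)

lemma outer_transpose: "transpose (outer p q) = outer q p"
  by (simp add: outer_def transpose_def vec_eq_iff)

lemma upper_sci: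
  fixes PA PB QA QB :: "real^'n::finite^'n" and x :: "real^'n"
  assumes pA: "sym_pos_def PA" and pB: "sym_pos_def PB" and qA: "sym_pos_def QA" and qB: "sym_pos_def QB"
    and x0: "x \<noteq> 0" and w: "0 \<le> w" "w \<le> 1"
    and kkt1: "0 < w \<Longrightarrow> (matrix_inv (PB + (1 - w) *\<^sub>R QB) *v x) \<bullet> (PB *v (matrix_inv (PB + (1 - w) *\<^sub>R QB) *v x))
                 \<le> (matrix_inv (PA + w *\<^sub>R QA) *v x) \<bullet> (PA *v (matrix_inv (PA + w *\<^sub>R QA) *v x))"
    and kkt2: "w < 1 \<Longrightarrow> (matrix_inv (PA + w *\<^sub>R QA) *v x) \<bullet> (PA *v (matrix_inv (PA + w *\<^sub>R QA) *v x))
                 \<le> (matrix_inv (PB + (1 - w) *\<^sub>R QB) *v x) \<bullet> (PB *v (matrix_inv (PB + (1 - w) *\<^sub>R QB) *v x))"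
  shows "\<exists>M \<in> A_Split PA PB. x \<bullet> (M_F_opt (PA + QA) (PB + QB) M *v x) = x \<bullet> (H_SCI PA QA PB QB w *v x)"
proof -
  define y1 where "y1 = matrix_inv (PA + w *\<^sub>R QA) *v x"
  define y2 where "y2 = matrix_inv (PB + (1 - w) *\<^sub>R QB) *v x"
  have e1: "(PA + w *\<^sub>R QA) *v y1 = x" unfolding y1_def by (rule solve_eq[OF pA qA w(1)])
  have e2: "(PB + (1 - w) *\<^sub>R QB) *v y2 = x" unfolding y2_def by (rule solve_eq[OF pB qB]) (use w in simp)
  define a where "a = y1 \<bullet> (PA *v y1)"
  define b where "b = y2 \<bullet> (PB *v y2)"
  have y10: "y1 \<noteq> 0" using e1 x0 by auto
  have y20: "y2 \<noteq> 0" using e2 x0 by auto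
  have a0: "a > 0" unfolding a_def by (rule pd_pos[OF pA y10])
  have b0: "b > 0" unfolding b_def by (rule pd_pos[OF pB y20])
  have k1: "0 < w \<Longrightarrow> b \<le> a" using kkt1 unfolding a_def b_def y1_def y2_def .
  have k2: "w < 1 \<Longrightarrow> a \<le> b" using kkt2 unfolding a_def b_def y1_def y2_def .
  define g where "g = max a b"
  have g0: "g > 0" unfolding g_def using a0 by linarith
  define p where "p = PA *v y1"
  define q where "q = PB *v y2"
  define M where "M = (1 / g) *\<^sub>R outer p q"
  have Mv: "M *v u = ((1 / g) * (q \<bullet> u)) *\<^sub>R p" for u
    unfolding M_def by (simp add: scaleR_mv outer_mv)
  have MT: "transpose M = (1 / g) *\<^sub>R outer q p"
    unfolding M_def by (simp add: transpose_scalar outer_transpose)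
  have MTv: "transpose M *v u = ((1 / g) * (p \<bullet> u)) *\<^sub>R q" for u
    unfolding MT by (simp add: scaleR_mv outer_mv)
  have qy2: "q \<bullet> y2 = b" unfolding q_def b_def by (simp add: inner_commute)
  have py1: "p \<bullet> y1 = a" unfolding p_def a_def by (simp add: inner_commute)
  have x1: "x = p + w *\<^sub>R (QA *v y1)"
    using e1 unfolding p_def by (simp add: matrix_vector_mult_add_rdistrib scaleR_mv)
  have x2: "x = q + (1 - w) *\<^sub>R (QB *v y2)"
    using e2 unfolding q_def by (simp add: matrix_vector_mult_add_rdistrib scaleR_mv)
  define t where "t = w *\<^sub>R y1"
  define s where "s = (1 - w) *\<^sub>R y2"
  have c1: "w + (1 / g) * ((1 - w) * b) = 1"
  proof (cases "w = 1")
    case True then show ?thesis by simp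
  next
    case False
    then have "a \<le> b" using k2 w by simp
    then have "g = b" unfolding g_def by simp
    then show ?thesis using b0 by (simp add: field_simps)
  qed
  have c2: "(1 - w) + (1 / g) * (w * a) = 1"
  proof (cases "w = 0")
    case True then show ?thesis by simp
  next
    case False
    then have "b \<le> a" using k1 w by simp
    then have "g = a" unfolding g_def by simp
    then show ?thesis using a0 by (simp add: field_simps)
  qed
  have eq1: "(PA + QA) *v t + M *v s = x"
  proof -
    have "(PA + QA) *v t + M *v s = w *\<^sub>R p + w *\<^sub>R (QA *v y1) + ((1 / g) * ((1 - w) * b)) *\<^sub>R p"
      unfolding t_def s_def Mv p_def
      by (simp add: matrix_vector_mult_add_rdistrib matrix_vector_mult_scaleR scaleR_add_right qy2)
    also have "\<dots> = (w + (1 / g) * ((1 - w) * b)) *\<^sub>R p + w *\<^sub>R (QA *v y1)"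
      by (simp add: scaleR_add_left)
    also have "\<dots> = x" unfolding c1 x1 by simp
    finally show ?thesis .
  qed
  have eq2: "transpose M *v t + (PB + QB) *v s = x"
  proof -
    have "transpose M *v t + (PB + QB) *v s = ((1 / g) * (w * a)) *\<^sub>R q + (1 - w) *\<^sub>R q + (1 - w) *\<^sub>R (QB *v y2)"
      unfolding t_def s_def MTv q_def
      by (simp add: matrix_vector_mult_add_rdistrib matrix_vector_mult_scaleR scaleR_add_right py1)
    also have "\<dots> = ((1 - w) + (1 / g) * (w * a)) *\<^sub>R q + (1 - w) *\<^sub>R (QB *v y2)"
      by (simp add: scaleR_add_left)
    also have "\<dots> = x" unfolding c2 x2 by simp
    finally show ?thesis .
  qed
  have MS: "M \<in> A_Split PA PB"
    unfolding A_Split_def psd_def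
  proof (intro CollectI conjI allI)
    show "transpose (block PA M (transpose M) PB) = block PA M (transpose M) PB"
      by (simp add: block_transpose pd_sym[OF pA] pd_sym[OF pB])
  next
    fix z :: "real^('n+'n)"
    define v where "v = (\<chi> i. z $ Inl i)"
    define u where "u = (\<chi> i. z $ Inr i)"
    have z: "z = vjoin v u" unfolding v_def u_def by (rule vjoin_surj)
    define X where "X = v \<bullet> (PA *v v)"
    define Y where "Y = u \<bullet> (PB *v u)"
    have "z \<bullet> (block PA M (transpose M) PB *v z) = X + 2 * ((v \<bullet> p) * (q \<bullet> u) / g) + Y"
      unfolding z block_qf dot_transpose_swap X_def Y_def Mv by simp
    moreover have "0 \<le> X + 2 * ((v \<bullet> p) * (q \<bullet> u) / g) + Y"
    proof (rule sc_ineq)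
      show "0 \<le> X" unfolding X_def by (rule pd_nonneg[OF pA])
      show "0 \<le> Y" unfolding Y_def by (rule pd_nonneg[OF pB])
      show "(v \<bullet> p)^2 \<le> X * a" unfolding X_def a_def p_def by (rule cs_pd[OF pA])
      have "(u \<bullet> q)^2 \<le> Y * b" unfolding Y_def b_def q_def by (rule cs_pd[OF pB])
      then show "(q \<bullet> u)^2 \<le> Y * b" by (simp add: inner_commute)
      show "0 < a" "0 < b" by (fact a0, fact b0)
      show "a \<le> g" "b \<le> g" unfolding g_def by auto
    qed
    ultimately show "0 \<le> z \<bullet> (block PA M (transpose M) PB *v z)" by simp
  qed
  have "x \<bullet> (M_F_opt (PA + QA) (PB + QB) M *v x) = x \<bullet> (t + s)"
    by (rule Phi_props(2)[OF pA pB qA qB MS eq1 eq2])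
  also have "\<dots> = x \<bullet> (H_SCI PA QA PB QB w *v x)"
    unfolding h_formula t_def s_def y1_def[symmetric] y2_def[symmetric] by (simp add: inner_add_right)
  finally show ?thesis using MS by blast
qed


lemma bound_below:
  fixes A :: "real^'n::finite^'n"
  assumes "invertible A"
  obtains B where "B > 0" "\<And>v. B * norm v \<le> norm (A *v v)"
proof -
  have "(\<lambda>x. matrix_inv A *v x) \<circ> (\<lambda>x. A *v x) = id"
    by (simp add: fun_eq_iff minv_v(2)[OF assms])
  then show ?thesis
    using linear_invertible_bounded_below_pos[OF matrix_vector_mul_linear matrix_vector_mul_linear] that
    by blast
qed

lemma bound_above:
  fixes Q :: "real^'n::finite^'n"
  obtains K where "K > 0" "\<And>v. norm (Q *v v) \<le> K * norm v"
  using linear_bounded_pos[OF matrix_vector_mul_linear] by blast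

lemma near_inv:
  fixes A0 Q :: "real^'n::finite^'n"
  assumes "invertible A0"
  obtains e B where "e > 0" "B > 0"
    "\<And>h. \<bar>h\<bar> < e \<Longrightarrow> invertible (A0 + h *\<^sub>R Q)"
    "\<And>h v. \<bar>h\<bar> < e \<Longrightarrow> B * norm v \<le> norm ((A0 + h *\<^sub>R Q) *v v)"
proof -
  obtain B0 where B0: "B0 > 0" "\<And>v. B0 * norm v \<le> norm (A0 *v v)" using bound_below[OF assms] by blast
  obtain K where K: "K > 0" "\<And>v. norm (Q *v v) \<le> K * norm v" using bound_above by blast
  define e where "e = B0 / (2 * K)"
  have e0: "e > 0" unfolding e_def using B0 K by simp
  have bnd: "(B0 / 2) * norm v \<le> norm ((A0 + h *\<^sub>R Q) *v v)" if h: "\<bar>h\<bar> < e" for h v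
  proof -
    have "A0 *v v = (A0 + h *\<^sub>R Q) *v v - h *\<^sub>R (Q *v v)"
      by (simp add: matrix_vector_mult_add_rdistrib scaleR_mv)
    then have "norm (A0 *v v) \<le> norm ((A0 + h *\<^sub>R Q) *v v) + \<bar>h\<bar> * norm (Q *v v)"
      by (metis norm_scaleR norm_triangle_ineq4)
    also have "\<bar>h\<bar> * norm (Q *v v) \<le> \<bar>h\<bar> * (K * norm v)"
      by (rule mult_left_mono[OF K(2)]) simp
    also have "\<bar>h\<bar> * (K * norm v) \<le> e * (K * norm v)"
      by (rule mult_right_mono) (use h K in auto)
    also have "e * (K * norm v) = (B0 / 2) * norm v" unfolding e_def using K by simp
    finally have "norm (A0 *v v) \<le> norm ((A0 + h *\<^sub>R Q) *v v) + (B0 / 2) * norm v" by simp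
    then show ?thesis using B0(2)[of v] by linarith
  qed
  show ?thesis
  proof (rule that[OF e0, of "B0 / 2"])
    show "B0 / 2 > 0" using B0 by simp
    show "\<And>h v. \<bar>h\<bar> < e \<Longrightarrow> B0 / 2 * norm v \<le> norm ((A0 + h *\<^sub>R Q) *v v)" by (rule bnd)
    fix h :: real assume h: "\<bar>h\<bar> < e"
    show "invertible (A0 + h *\<^sub>R Q)"
    proof (rule ker_invertible)
      fix v assume "(A0 + h *\<^sub>R Q) *v v = 0"
      then have "(B0 / 2) * norm v \<le> 0" using bnd[OF h, of v] by simp
      then show "v = 0" using B0 by (simp add: mult_le_0_iff)
    qed
  qed
qed

lemma matrix_add_rdistrib': "(X + Y) ** Z = X ** Z + Y ** (Z::real^'n::finite^'n)"
  for X Y :: "real^'n^'n"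
  by (simp add: matrix_matrix_mult_def vec_eq_iff sum.distrib distrib_right)

lemma matrix_diff_ldistrib': "X ** (Y - Z) = X ** Y - X ** (Z::real^'n::finite^'n)"
  for X Y :: "real^'n^'n"
  by (simp add: matrix_matrix_mult_def vec_eq_iff sum_subtractf right_diff_distrib)

lemma matrix_scaleR_right': "X ** (h *\<^sub>R Y) = h *\<^sub>R (X ** (Y::real^'n::finite^'n))"
  for X :: "real^'n^'n"
  by (simp add: matrix_scalar_ac scalar_matrix_assoc)

lemma inv_resolvent:
  fixes A0 Q :: "real^'n::finite^'n"
  assumes i0: "invertible A0" and i1: "invertible (A0 + h *\<^sub>R Q)"
  shows "matrix_inv (A0 + h *\<^sub>R Q) = matrix_inv A0 - h *\<^sub>R (matrix_inv A0 ** Q ** matrix_inv (A0 + h *\<^sub>R Q))"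
proof -
  let ?N0 = "matrix_inv A0" and ?N1 = "matrix_inv (A0 + h *\<^sub>R Q)"
  have "?N0 = ?N0 ** ((A0 + h *\<^sub>R Q) ** ?N1)" by (simp add: minv(1)[OF i1])
  also have "\<dots> = (?N0 ** A0) ** ?N1 + h *\<^sub>R (?N0 ** Q ** ?N1)"
    by (simp add: matrix_mul_assoc matrix_add_ldistrib matrix_add_rdistrib' matrix_scaleR_right' scalar_matrix_assoc)
  also have "\<dots> = ?N1 + h *\<^sub>R (?N0 ** Q ** ?N1)" by (simp add: minv(2)[OF i0])
  finally show ?thesis by (simp add: algebra_simps)
qed

lemma mat_entry: "(A *v axis j (1::real)) $ i = A $ i $ j"
  for A :: "real^'n::finite^'n"
proof -
  have "(A *v axis j (1::real)) $ i = (\<Sum>k\<in>UNIV. A $ i $ k * (if k = j then 1 else 0))"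
    by (simp add: matrix_vector_mult_def axis_def)
  also have "\<dots> = (\<Sum>k\<in>UNIV. if k = j then A $ i $ k else 0)" by (rule sum.cong) auto
  also have "\<dots> = A $ i $ j" by simp
  finally show ?thesis .
qed

lemma mat_mult_tendsto:
  fixes X :: "real^'n::finite^'n" and G :: "'a \<Rightarrow> real^'n^'n"
  assumes "(G \<longlongrightarrow> G0) F"
  shows "((\<lambda>t. X ** G t) \<longlongrightarrow> X ** G0) F"
  unfolding matrix_matrix_mult_def
  by (auto intro!: vec_tendstoI tendsto_intros assms)

lemma cont_inv:
  fixes A0 Q :: "real^'n::finite^'n"
  assumes i0: "invertible A0"
  shows "((\<lambda>h. matrix_inv (A0 + h *\<^sub>R Q)) \<longlongrightarrow> matrix_inv A0) (at 0)"
proof -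
  obtain e B where e: "e > 0" "B > 0"
    "\<And>h. \<bar>h\<bar> < e \<Longrightarrow> invertible (A0 + h *\<^sub>R Q)"
    "\<And>h v. \<bar>h\<bar> < e \<Longrightarrow> B * norm v \<le> norm ((A0 + h *\<^sub>R Q) *v v)"
    using near_inv[OF i0] by blast
  obtain K where K: "K > 0" "\<And>v. norm (Q *v v) \<le> K * norm v" using bound_above by blast
  obtain C0 where C0: "C0 > 0" "\<And>v. norm (matrix_inv A0 *v v) \<le> C0 * norm v" using bound_above by blast
  have vec: "((\<lambda>h. matrix_inv (A0 + h *\<^sub>R Q) *v x) \<longlongrightarrow> matrix_inv A0 *v x) (at 0)" for x
  proof -
    have ev: "eventually (\<lambda>h. norm (matrix_inv (A0 + h *\<^sub>R Q) *v x - matrix_inv A0 *v x)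
                 \<le> \<bar>h\<bar> * (C0 * K * norm x / B)) (at 0)"
      unfolding eventually_at
    proof (intro exI[of _ e] conjI ballI impI)
      show "e > 0" by (fact e(1))
      fix h :: real assume "h \<noteq> 0 \<and> dist h 0 < e"
      then have h: "\<bar>h\<bar> < e" by simp
      let ?N = "matrix_inv (A0 + h *\<^sub>R Q)"
      have "B * norm (?N *v x) \<le> norm ((A0 + h *\<^sub>R Q) *v (?N *v x))" by (rule e(4)[OF h])
      also have "\<dots> = norm x" by (simp add: minv_v(1)[OF e(3)[OF h]])
      finally have nN: "norm (?N *v x) \<le> norm x / B" using e(2) by (simp add: field_simps)
      have "?N *v x - matrix_inv A0 *v x = - (h *\<^sub>R (matrix_inv A0 *v (Q *v (?N *v x))))"
        by (subst inv_resolvent[OF i0 e(3)[OF h]])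
           (simp add: matrix_vector_mult_diff_rdistrib scaleR_mv matrix_vector_mul_assoc matrix_mul_assoc)
      then have "norm (?N *v x - matrix_inv A0 *v x) = \<bar>h\<bar> * norm (matrix_inv A0 *v (Q *v (?N *v x)))"
        by simp
      also have "\<dots> \<le> \<bar>h\<bar> * (C0 * (K * (norm x / B)))"
      proof (rule mult_left_mono)
        have "norm (matrix_inv A0 *v (Q *v (?N *v x))) \<le> C0 * norm (Q *v (?N *v x))" by (rule C0(2))
        also have "\<dots> \<le> C0 * (K * norm (?N *v x))" by (rule mult_left_mono[OF K(2)]) (use C0 in simp)
        also have "\<dots> \<le> C0 * (K * (norm x / B))"
          by (intro mult_left_mono nN) (use C0 K in simp_all)
        finally show "norm (matrix_inv A0 *v (Q *v (?N *v x))) \<le> C0 * (K * (norm x / B))" .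
      qed simp
      finally show "norm (?N *v x - matrix_inv A0 *v x) \<le> \<bar>h\<bar> * (C0 * K * norm x / B)" by simp
    qed
    have "((\<lambda>h. \<bar>h\<bar> * (C0 * K * norm x / B)) \<longlongrightarrow> \<bar>0\<bar> * (C0 * K * norm x / B)) (at (0::real))"
      by (intro tendsto_intros)
    then have "((\<lambda>h. \<bar>h\<bar> * (C0 * K * norm x / B)) \<longlongrightarrow> 0) (at (0::real))" by simp
    then have "((\<lambda>h. matrix_inv (A0 + h *\<^sub>R Q) *v x - matrix_inv A0 *v x) \<longlongrightarrow> 0) (at 0)"
      by (rule Lim_null_comparison[OF ev])
    then show ?thesis by (simp add: LIM_zero_iff)
  qed
  show ?thesis
  proof (rule vec_tendstoI)
    fix i
    show "((\<lambda>h. matrix_inv (A0 + h *\<^sub>R Q) $ i) \<longlongrightarrow> matrix_inv A0 $ i) (at 0)"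
    proof (rule vec_tendstoI)
      fix j
      have "((\<lambda>h. (matrix_inv (A0 + h *\<^sub>R Q) *v axis j 1) $ i) \<longlongrightarrow> (matrix_inv A0 *v axis j 1) $ i) (at 0)"
        by (rule tendsto_vec_nth[OF vec])
      then show "((\<lambda>h. matrix_inv (A0 + h *\<^sub>R Q) $ i $ j) \<longlongrightarrow> matrix_inv A0 $ i $ j) (at 0)"
        by (simp add: mat_entry)
    qed
  qed
qed

lemma inv_deriv:
  fixes P Q :: "real^'n::finite^'n"
  assumes i0: "invertible (P + w0 *\<^sub>R Q)"
  shows "((\<lambda>w. matrix_inv (P + w *\<^sub>R Q)) has_vector_derivative
          (- (matrix_inv (P + w0 *\<^sub>R Q) ** Q ** matrix_inv (P + w0 *\<^sub>R Q)))) (at w0)"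
proof -
  define A0 where "A0 = P + w0 *\<^sub>R Q"
  define N0 where "N0 = matrix_inv A0"
  define D where "D = - (N0 ** Q ** N0)"
  have iA: "invertible A0" using i0 unfolding A0_def .
  have shift: "P + (w0 + h) *\<^sub>R Q = A0 + h *\<^sub>R Q" for h
    unfolding A0_def by (simp add: scaleR_add_left algebra_simps)
  obtain e B where e: "e > 0" "B > 0"
    "\<And>h. \<bar>h\<bar> < e \<Longrightarrow> invertible (A0 + h *\<^sub>R Q)"
    "\<And>h v. \<bar>h\<bar> < e \<Longrightarrow> B * norm v \<le> norm ((A0 + h *\<^sub>R Q) *v v)"
    using near_inv[OF iA] by blast
  have lim1: "((\<lambda>h. N0 ** Q ** (N0 - matrix_inv (A0 + h *\<^sub>R Q))) \<longlongrightarrow> N0 ** Q ** (N0 - N0)) (at 0)"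
    unfolding N0_def
    by (intro mat_mult_tendsto tendsto_intros cont_inv[OF iA])
  have lim2: "((\<lambda>h. norm (N0 ** Q ** (N0 - matrix_inv (A0 + h *\<^sub>R Q)))) \<longlongrightarrow> 0) (at 0)"
    using tendsto_norm[OF lim1] by simp
  have ev: "eventually (\<lambda>h. norm (N0 ** Q ** (N0 - matrix_inv (A0 + h *\<^sub>R Q))) =
      norm (matrix_inv (P + (w0 + h) *\<^sub>R Q) - matrix_inv (P + w0 *\<^sub>R Q) - h *\<^sub>R D) / norm h) (at 0)"
    unfolding eventually_at
  proof (intro exI[of _ e] conjI ballI impI)
    show "e > 0" by (fact e(1))
    fix h :: real assume "h \<noteq> 0 \<and> dist h 0 < e"
    then have h: "\<bar>h\<bar> < e" and h0: "h \<noteq> 0" by auto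
    let ?N = "matrix_inv (A0 + h *\<^sub>R Q)"
    have "matrix_inv (P + (w0 + h) *\<^sub>R Q) - matrix_inv (P + w0 *\<^sub>R Q) - h *\<^sub>R D
        = ?N - N0 - h *\<^sub>R D" unfolding shift N0_def A0_def ..
    also have "\<dots> = h *\<^sub>R (N0 ** Q ** (N0 - ?N))"
      unfolding D_def
      by (subst inv_resolvent[OF iA e(3)[OF h]]) (simp add: N0_def matrix_diff_ldistrib' algebra_simps)
    finally show "norm (N0 ** Q ** (N0 - ?N)) =
      norm (matrix_inv (P + (w0 + h) *\<^sub>R Q) - matrix_inv (P + w0 *\<^sub>R Q) - h *\<^sub>R D) / norm h"
      using h0 by simp
  qed
  have "((\<lambda>h. norm (matrix_inv (P + (w0 + h) *\<^sub>R Q) - matrix_inv (P + w0 *\<^sub>R Q) - h *\<^sub>R D) / norm h) \<longlongrightarrow> 0) (at 0)"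
    by (rule Lim_transform_eventually[OF lim2 ev])
  then have "((\<lambda>w. matrix_inv (P + w *\<^sub>R Q)) has_derivative (\<lambda>h. h *\<^sub>R D)) (at w0)"
    unfolding has_derivative_at by (simp add: bounded_linear_scaleR_left)
  then show ?thesis unfolding has_vector_derivative_def D_def N0_def A0_def .
qed


lemma neg_mv: "(- A) *v x = - (A *v x)" for A :: "real^'n::finite^'n"
  by (simp add: vec_eq_iff matrix_vector_mult_def sum_negf)

lemma alpha_mono:
  fixes P Q :: "real^'n::finite^'n"
  assumes pP: "sym_pos_def P" and pQ: "sym_pos_def Q" and x0: "x \<noteq> 0" and w: "0 \<le> w" "w < w'"
  shows "(matrix_inv (P + w' *\<^sub>R Q) *v x) \<bullet> (P *v (matrix_inv (P + w' *\<^sub>R Q) *v x))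
       < (matrix_inv (P + w *\<^sub>R Q) *v x) \<bullet> (P *v (matrix_inv (P + w *\<^sub>R Q) *v x))"
proof -
  define y where "y = matrix_inv (P + w *\<^sub>R Q) *v x"
  define z where "z = matrix_inv (P + w' *\<^sub>R Q) *v x"
  define dl where "dl = w' - w"
  have dl0: "dl > 0" unfolding dl_def using w by simp
  have w': "w' = w + dl" unfolding dl_def by simp
  have ey: "(P + w *\<^sub>R Q) *v y = x" unfolding y_def by (rule solve_eq[OF pP pQ w(1)])
  have ez: "(P + w' *\<^sub>R Q) *v z = x" unfolding z_def by (rule solve_eq[OF pP pQ]) (use w in simp)
  have z0: "z \<noteq> 0" using ez x0 by auto
  have sP: "\<And>u v. u \<bullet> (P *v v) = v \<bullet> (P *v u)" by (rule dot_mv_sym[OF pd_sym[OF pP]])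
  have sQ: "\<And>u v. u \<bullet> (Q *v v) = v \<bullet> (Q *v u)" by (rule dot_mv_sym[OF pd_sym[OF pQ]])
  define e where "e = y - z"
  define a where "a = y \<bullet> (P *v y)"
  define b where "b = z \<bullet> (P *v z)"
  define pyz where "pyz = y \<bullet> (P *v z)"
  define qzz where "qzz = z \<bullet> (Q *v z)"
  define qzy where "qzy = z \<bullet> (Q *v y)"
  define qze where "qze = z \<bullet> (Q *v e)"
  define pee where "pee = e \<bullet> (P *v e)"
  define qee where "qee = e \<bullet> (Q *v e)"
  have F1: "a - 2 * pyz + b \<ge> 0"
  proof -
    have "0 \<le> (y - z) \<bullet> (P *v (y - z))" by (rule pd_nonneg[OF pP])
    also have "\<dots> = a - 2 * pyz + b"
      unfolding a_def b_def pyz_def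
      by (simp add: inner_diff_left inner_diff_right matrix_vector_mult_diff_distrib sP[of z y])
    finally show ?thesis .
  qed
  have F2: "pyz + w * qzy = b + w' * qzz"
  proof -
    have "z \<bullet> x = z \<bullet> (P *v y) + w * qzy"
      unfolding qzy_def ey[symmetric] by (simp add: matrix_vector_mult_add_rdistrib scaleR_mv inner_add_right)
    moreover have "z \<bullet> x = b + w' * qzz"
      unfolding b_def qzz_def ez[symmetric] by (simp add: matrix_vector_mult_add_rdistrib scaleR_mv inner_add_right)
    moreover have "z \<bullet> (P *v y) = pyz" unfolding pyz_def by (rule sP)
    ultimately show ?thesis by linarith
  qed
  have F3: "qzy = qzz + qze"
    unfolding qzy_def qzz_def qze_def e_def
    by (simp add: matrix_vector_mult_diff_distrib inner_diff_right)
  have Pe: "(P + w *\<^sub>R Q) *v e = dl *\<^sub>R (Q *v z)"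
  proof -
    have "(P + w *\<^sub>R Q) *v z = (P + w' *\<^sub>R Q) *v z - dl *\<^sub>R (Q *v z)"
      unfolding w' by (simp add: matrix_vector_mult_add_rdistrib scaleR_mv scaleR_add_left algebra_simps)
    then show ?thesis unfolding e_def using ey ez by (simp add: matrix_vector_mult_diff_distrib)
  qed
  have F4: "dl * qze - pee - w * qee = 0"
  proof -
    have "e \<bullet> ((P + w *\<^sub>R Q) *v e) = pee + w * qee"
      unfolding pee_def qee_def by (simp add: matrix_vector_mult_add_rdistrib scaleR_mv inner_add_right)
    moreover have "e \<bullet> ((P + w *\<^sub>R Q) *v e) = dl * qze"
      unfolding Pe qze_def by (simp add: sQ[of e z])
    ultimately show ?thesis by linarith
  qed
  have F5: "dl^2 * qzz - 2 * dl * w * qze + w^2 * qee \<ge> 0"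
  proof -
    have "0 \<le> (dl *\<^sub>R z - w *\<^sub>R e) \<bullet> (Q *v (dl *\<^sub>R z - w *\<^sub>R e))" by (rule pd_nonneg[OF pQ])
    also have "\<dots> = dl^2 * qzz - 2 * dl * w * qze + w^2 * qee"
      unfolding qzz_def qze_def qee_def
      apply (simp add: inner_diff_left inner_diff_right matrix_vector_mult_diff_distrib matrix_vector_mult_scaleR
          sQ[of e z])
      apply (simp add: power2_eq_square algebra_simps)
      done
    finally show ?thesis .
  qed
  have key: "dl * (dl * qzz - w * qze) - w * pee = (dl^2 * qzz - 2 * dl * w * qze + w^2 * qee) + w * (dl * qze - pee - w * qee)"
    by algebra
  have pos: "dl * (dl * qzz - w * qze) > 0"
  proof (cases "w = 0")
    case True
    have "qzz > 0" unfolding qzz_def by (rule pd_pos[OF pQ z0])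
    then show ?thesis using True dl0 by simp
  next
    case False
    then have wp: "w > 0" using w by simp
    have "Q *v z \<noteq> 0" using pd_pos[OF pQ z0] by auto
    then have "e \<noteq> 0" using Pe dl0 by auto
    then have "pee > 0" unfolding pee_def by (rule pd_pos[OF pP])
    then have "w * pee > 0" using wp by simp
    moreover have "w * (dl * qze - pee - w * qee) = 0" using F4 by simp
    ultimately show ?thesis using key F5 by linarith
  qed
  then have pos2: "dl * qzz - w * qze > 0" using dl0 by (simp add: zero_less_mult_iff)
  have "a - b \<ge> 2 * (dl * qzz - w * qze)"
  proof -
    have "w' * qzz = w * qzz + dl * qzz" unfolding w' by (simp add: algebra_simps)
    moreover have "w * qzy = w * qzz + w * qze" unfolding F3 by (simp add: algebra_simps)
    ultimately have "pyz = b + dl * qzz - w * qze" using F2 by linarith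
    then show ?thesis using F1 by (simp add: algebra_simps)
  qed
  then have "b < a" using pos2 by (smt (verit))
  then show ?thesis unfolding a_def b_def y_def z_def .
qed

lemma H_eq:
  fixes PA QA PB QB :: "real^'n::finite^'n"
  shows "H_SCI PA QA PB QB = (\<lambda>w. w *\<^sub>R matrix_inv (PA + w *\<^sub>R QA) + (1 - w) *\<^sub>R matrix_inv ((PB + QB) + w *\<^sub>R (- QB)))"
proof -
  have eq: "PB + (1 - w) *\<^sub>R QB = (PB + QB) + w *\<^sub>R (- QB)" for w :: real
    by (simp add: scaleR_diff_left algebra_simps)
  show ?thesis unfolding H_SCI_def by (rule ext) (simp only: eq)
qed

lemma H_deriv:
  fixes PA QA PB QB :: "real^'n::finite^'n"
  assumes pA: "sym_pos_def PA" and pB: "sym_pos_def PB" and qA: "sym_pos_def QA" and qB: "sym_pos_def QB"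
    and w: "0 \<le> w" "w \<le> 1"
  shows "(H_SCI PA QA PB QB has_vector_derivative
     (w *\<^sub>R (- (matrix_inv (PA + w *\<^sub>R QA) ** QA ** matrix_inv (PA + w *\<^sub>R QA))) + 1 *\<^sub>R matrix_inv (PA + w *\<^sub>R QA)
      + ((1 - w) *\<^sub>R (- (matrix_inv ((PB + QB) + w *\<^sub>R (- QB)) ** (- QB) ** matrix_inv ((PB + QB) + w *\<^sub>R (- QB))))
         + (- 1) *\<^sub>R matrix_inv ((PB + QB) + w *\<^sub>R (- QB))))) (at w)"
proof -
  have iA: "invertible (PA + w *\<^sub>R QA)" by (rule pd_inv[OF pd_comb[OF pA qA w(1)]])
  have eqB: "(PB + QB) + w *\<^sub>R (- QB) = PB + (1 - w) *\<^sub>R QB"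
    by (simp add: scaleR_diff_left algebra_simps)
  have iB: "invertible ((PB + QB) + w *\<^sub>R (- QB))" unfolding eqB
    by (rule pd_inv[OF pd_comb[OF pB qB]]) (use w in simp)
  have d1: "((\<lambda>w. w) has_field_derivative 1) (at w)" by (rule DERIV_ident)
  have d2: "((\<lambda>w. 1 - w) has_field_derivative - 1) (at w)" by (auto intro!: derivative_eq_intros)
  show ?thesis unfolding H_eq
    by (rule has_vector_derivative_add[OF has_vector_derivative_scaleR[OF d1 inv_deriv[OF iA]]
                                            has_vector_derivative_scaleR[OF d2 inv_deriv[OF iB]]])
qed

lemma d_formula:
  fixes PA QA PB QB :: "real^'n::finite^'n"
  assumes pA: "sym_pos_def PA" and pB: "sym_pos_def PB" and qA: "sym_pos_def QA" and qB: "sym_pos_def QB"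
    and w: "0 \<le> w" "w \<le> 1"
  shows "x \<bullet> (H_SCI' PA QA PB QB w *v x) =
     (matrix_inv (PA + w *\<^sub>R QA) *v x) \<bullet> (PA *v (matrix_inv (PA + w *\<^sub>R QA) *v x))
   - (matrix_inv (PB + (1 - w) *\<^sub>R QB) *v x) \<bullet> (PB *v (matrix_inv (PB + (1 - w) *\<^sub>R QB) *v x))"
proof -
  define NA where "NA = matrix_inv (PA + w *\<^sub>R QA)"
  define NB where "NB = matrix_inv (PB + (1 - w) *\<^sub>R QB)"
  have eqB: "(PB + QB) + w *\<^sub>R (- QB) = PB + (1 - w) *\<^sub>R QB"
    by (simp add: scaleR_diff_left algebra_simps)
  have pdA: "sym_pos_def (PA + w *\<^sub>R QA)" by (rule pd_comb[OF pA qA w(1)])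
  have pdB: "sym_pos_def (PB + (1 - w) *\<^sub>R QB)" by (rule pd_comb[OF pB qB]) (use w in simp)
  have symNA: "transpose NA = NA" unfolding NA_def by (rule minv_sym[OF pd_inv[OF pdA] pd_sym[OF pdA]])
  have symNB: "transpose NB = NB" unfolding NB_def by (rule minv_sym[OF pd_inv[OF pdB] pd_sym[OF pdB]])
  define y1 where "y1 = NA *v x"
  define y2 where "y2 = NB *v x"
  have e1: "(PA + w *\<^sub>R QA) *v y1 = x" unfolding y1_def NA_def by (rule solve_eq[OF pA qA w(1)])
  have e2: "(PB + (1 - w) *\<^sub>R QB) *v y2 = x" unfolding y2_def NB_def by (rule solve_eq[OF pB qB]) (use w in simp)
  have dA: "x \<bullet> (NA *v u) = y1 \<bullet> u" for u unfolding y1_def using dot_mv[of x NA u] symNA by simp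
  have dB: "x \<bullet> (NB *v u) = y2 \<bullet> u" for u unfolding y2_def using dot_mv[of x NB u] symNB by simp
  have H': "H_SCI' PA QA PB QB w =
     w *\<^sub>R (- (NA ** QA ** NA)) + 1 *\<^sub>R NA + ((1 - w) *\<^sub>R (- (NB ** (- QB) ** NB)) + (- 1) *\<^sub>R NB)"
    unfolding H_SCI'_def NA_def NB_def eqB[symmetric]
    by (rule vector_derivative_at[OF H_deriv[OF pA pB qA qB w]])
  have split: "x \<bullet> (H_SCI' PA QA PB QB w *v x) =
      w * (x \<bullet> ((- (NA ** QA ** NA)) *v x)) + 1 * (x \<bullet> (NA *v x))
      + ((1 - w) * (x \<bullet> ((- (NB ** (- QB) ** NB)) *v x)) + (- 1) * (x \<bullet> (NB *v x)))"
    unfolding H' by (simp only: matrix_vector_mult_add_rdistrib scaleR_mv inner_add_right inner_scaleR_right)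
  have c1: "x \<bullet> ((- (NA ** QA ** NA)) *v x) = - (y1 \<bullet> (QA *v y1))"
    by (simp add: neg_mv matrix_vector_mul_assoc[symmetric] y1_def[symmetric] dA)
  have c2: "x \<bullet> ((- (NB ** (- QB) ** NB)) *v x) = y2 \<bullet> (QB *v y2)"
    by (simp add: neg_mv mv_neg matrix_vector_mul_assoc[symmetric] y2_def[symmetric] dB)
  have "x \<bullet> (H_SCI' PA QA PB QB w *v x) =
      w * (- (y1 \<bullet> (QA *v y1))) + x \<bullet> y1 + ((1 - w) * (y2 \<bullet> (QB *v y2)) - x \<bullet> y2)"
    unfolding split c1 c2 y1_def y2_def by simp
  also have "\<dots> = y1 \<bullet> (PA *v y1) - y2 \<bullet> (PB *v y2)"
    using xy_eq[OF e1] xy_eq[OF e2] by (simp add: algebra_simps)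
  finally show ?thesis unfolding y1_def y2_def NA_def NB_def .
qed

lemma h_deriv:
  fixes PA QA PB QB :: "real^'n::finite^'n"
  assumes pA: "sym_pos_def PA" and pB: "sym_pos_def PB" and qA: "sym_pos_def QA" and qB: "sym_pos_def QB"
    and w: "0 \<le> w" "w \<le> 1"
  shows "((\<lambda>w. x \<bullet> (H_SCI PA QA PB QB w *v x)) has_real_derivative x \<bullet> (H_SCI' PA QA PB QB w *v x)) (at w)"
proof -
  have lin: "linear (\<lambda>M::real^'n^'n. x \<bullet> (M *v x))"
    by (rule linearI) (simp_all add: matrix_vector_mult_add_rdistrib scaleR_mv inner_add_right)
  then have bl: "bounded_linear (\<lambda>M::real^'n^'n. x \<bullet> (M *v x))" by (simp add: linear_conv_bounded_linear)
  have hv: "(H_SCI PA QA PB QB has_vector_derivative H_SCI' PA QA PB QB w) (at w)"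
    unfolding H_SCI'_def using H_deriv[OF pA pB qA qB w] by (simp add: vector_derivative_at)
  show ?thesis unfolding has_real_derivative_iff_has_vector_derivative
    by (rule bounded_linear.has_vector_derivative[OF bl hv])
qed


lemma tri_abstract:
  fixes d h :: "real \<Rightarrow> real" and G :: real
  assumes mono: "\<And>u v. 0 \<le> u \<Longrightarrow> u < v \<Longrightarrow> v \<le> 1 \<Longrightarrow> d v < d u"
    and der: "\<And>w. 0 \<le> w \<Longrightarrow> w \<le> 1 \<Longrightarrow> (h has_real_derivative d w) (at w)"
    and kkt: "\<And>w. 0 \<le> w \<Longrightarrow> w \<le> 1 \<Longrightarrow> (0 < w \<longrightarrow> 0 \<le> d w) \<Longrightarrow> (w < 1 \<longrightarrow> d w \<le> 0) \<Longrightarrow> G = h w"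
  shows "let c1 = (d 0 < 0); c2 = (d 1 > 0);
             c3 = (\<exists>!w0. w0 \<in> {0..1} \<and> d w0 = 0)
         in ((c1 \<and> \<not> c2 \<and> \<not> c3) \<or> (\<not> c1 \<and> c2 \<and> \<not> c3) \<or> (\<not> c1 \<and> \<not> c2 \<and> c3))
            \<and> (c1 \<longrightarrow> G = h 0)
            \<and> (c2 \<longrightarrow> G = h 1)
            \<and> (\<forall>w0. c3 \<and> w0 \<in> {0..1} \<and> d w0 = 0 \<longrightarrow> G = h w0)"
proof -
  have cont: "continuous_on {0..1} h"
    using der by (intro continuous_at_imp_continuous_on) (meson DERIV_isCont atLeastAtMost_iff)
  have "\<exists>x\<in>{0..1::real}. \<forall>y\<in>{0..1}. h y \<le> h x"
    by (rule continuous_attains_sup[OF compact_Icc _ cont]) simp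
  then obtain wm where wm: "wm \<in> {0..1}" "\<And>y. y \<in> {0..1} \<Longrightarrow> h y \<le> h wm"
    by blast
  have dwm: "DERIV h wm :> d wm" using der wm(1) by simp
  have wm1: "0 \<le> d wm" if "0 < wm"
  proof (rule ccontr)
    assume "\<not> 0 \<le> d wm"
    then obtain e where e: "e > 0" "\<And>t. t > 0 \<Longrightarrow> t < e \<Longrightarrow> h wm < h (wm - t)"
      using DERIV_neg_dec_left[OF dwm] by force
    let ?t = "min (e/2) wm"
    have "h wm < h (wm - ?t)" using e that by (intro e(2)) auto
    moreover have "wm - ?t \<in> {0..1}" using wm(1) e that by auto
    ultimately show False using wm(2)[of "wm - ?t"] by linarith
  qed
  have wm2: "d wm \<le> 0" if "wm < 1"
  proof (rule ccontr)
    assume "\<not> d wm \<le> 0"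
    then obtain e where e: "e > 0" "\<And>t. t > 0 \<Longrightarrow> t < e \<Longrightarrow> h wm < h (wm + t)"
      using DERIV_pos_inc_right[OF dwm] by force
    let ?t = "min (e/2) (1 - wm)"
    have "h wm < h (wm + ?t)" using e that by (intro e(2)) auto
    moreover have "wm + ?t \<in> {0..1}" using wm(1) e that by auto
    ultimately show False using wm(2)[of "wm + ?t"] by linarith
  qed
  have dle: "d v \<le> d u" if "0 \<le> u" "u \<le> v" "v \<le> 1" for u v
    using mono[of u v] that by (cases "u = v") auto
  have uniq: "u = v" if "u \<in> {0..1}" "v \<in> {0..1}" "d u = d v" for u v
  proof (rule ccontr)
    assume "u \<noteq> v"
    then consider "u < v" | "v < u" by linarith
    then show False
    proof cases
      case 1 then show False using mono[of u v] that by auto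
    next
      case 2 then show False using mono[of v u] that by auto
    qed
  qed
  show ?thesis
  proof (unfold Let_def, intro conjI impI allI)
    show "(d 0 < 0 \<and> \<not> d 1 > 0 \<and> \<not> (\<exists>!w0. w0 \<in> {0..1} \<and> d w0 = 0)) \<or>
          (\<not> d 0 < 0 \<and> d 1 > 0 \<and> \<not> (\<exists>!w0. w0 \<in> {0..1} \<and> d w0 = 0)) \<or>
          (\<not> d 0 < 0 \<and> \<not> d 1 > 0 \<and> (\<exists>!w0. w0 \<in> {0..1} \<and> d w0 = 0))"
    proof (cases "d 0 < 0")
      case True
      have "d 1 < 0" using dle[of 0 1] True by auto
      moreover have "d w \<noteq> 0" if "w \<in> {0..1}" for w using dle[of 0 w] that True by auto
      then have "\<not> (\<exists>!w0. w0 \<in> {0..1} \<and> d w0 = 0)" by blast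
      ultimately show ?thesis using True by simp
    next
      case False
      show ?thesis
      proof (cases "d 1 > 0")
        case True
        have "d w \<noteq> 0" if "w \<in> {0..1}" for w using dle[of w 1] that True by auto
        then have "\<not> (\<exists>!w0. w0 \<in> {0..1} \<and> d w0 = 0)" by blast
        then show ?thesis using True False by simp
      next
        case False2: False
        have "d wm = 0"
        proof (cases "wm = 0")
          case True
          then show ?thesis using wm2 False by auto
        next
          case n0: False
          show ?thesis
          proof (cases "wm = 1")
            case True
            then show ?thesis using wm1 False2 by auto
          next
            case False
            then show ?thesis using wm1 wm2 n0 wm(1) by fastforce
          qed
        qed
        then have "\<exists>!w0. w0 \<in> {0..1} \<and> d w0 = 0" using wm(1) uniq by (intro ex1I[of _ wm]) auto
        then show ?thesis using False False2 by simp
      qed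
    qed
  next
    assume "d 0 < 0" then show "G = h 0" using kkt[of 0] by auto
  next
    assume "d 1 > 0" then show "G = h 1" using kkt[of 1] by auto
  next
    fix w0 assume "(\<exists>!w0. w0 \<in> {0..1} \<and> d w0 = 0) \<and> w0 \<in> {0..1} \<and> d w0 = 0"
    then show "G = h w0" using kkt[of w0] by auto
  qed
qed


theorem theorem2:
  fixes PA PB QA QB :: "real ^ 'n ^ 'n" and x :: "real ^ 'n"
  assumes "sym_pos_def PA" "sym_pos_def PB" "sym_pos_def QA" "sym_pos_def QB"
    and "x \<noteq> 0"
  shows "let d = (\<lambda>w. x \<bullet> (H_SCI' PA QA PB QB w *v x));
             h = (\<lambda>w. x \<bullet> (H_SCI PA QA PB QB w *v x));
             c1 = (d 0 < 0); c2 = (d 1 > 0);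
             c3 = (\<exists>!w0. w0 \<in> {0..1} \<and> d w0 = 0)
         in ((c1 \<and> \<not> c2 \<and> \<not> c3) \<or> (\<not> c1 \<and> c2 \<and> \<not> c3) \<or> (\<not> c1 \<and> \<not> c2 \<and> c3))
            \<and> (c1 \<longrightarrow> g_fun PA QA PB QB x = h 0)
            \<and> (c2 \<longrightarrow> g_fun PA QA PB QB x = h 1)
            \<and> (\<forall>w0. c3 \<and> w0 \<in> {0..1} \<and> d w0 = 0 \<longrightarrow> g_fun PA QA PB QB x = h w0)"
proof -
  note pA = assms(1) and pB = assms(2) and qA = assms(3) and qB = assms(4) and x0 = assms(5)
  define a where "a = (\<lambda>w. (matrix_inv (PA + w *\<^sub>R QA) *v x) \<bullet> (PA *v (matrix_inv (PA + w *\<^sub>R QA) *v x)))"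
  define b where "b = (\<lambda>w. (matrix_inv (PB + (1 - w) *\<^sub>R QB) *v x) \<bullet> (PB *v (matrix_inv (PB + (1 - w) *\<^sub>R QB) *v x)))"
  have dform: "x \<bullet> (H_SCI' PA QA PB QB w *v x) = a w - b w" if "0 \<le> w" "w \<le> 1" for w
    unfolding a_def b_def by (rule d_formula[OF pA pB qA qB that])
  have mono: "x \<bullet> (H_SCI' PA QA PB QB v *v x) < x \<bullet> (H_SCI' PA QA PB QB u *v x)"
    if "0 \<le> u" "u < v" "v \<le> 1" for u v
  proof -
    have "a v < a u" unfolding a_def by (rule alpha_mono[OF pA qA x0]) (use that in auto)
    moreover have "b u < b v"
    proof -
      have "(matrix_inv (PB + (1 - u) *\<^sub>R QB) *v x) \<bullet> (PB *v (matrix_inv (PB + (1 - u) *\<^sub>R QB) *v x))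
          < (matrix_inv (PB + (1 - v) *\<^sub>R QB) *v x) \<bullet> (PB *v (matrix_inv (PB + (1 - v) *\<^sub>R QB) *v x))"
        by (rule alpha_mono[OF pB qB x0]) (use that in auto)
      then show ?thesis unfolding b_def .
    qed
    ultimately show ?thesis using dform[of u] dform[of v] that by simp
  qed
  have der: "((\<lambda>w. x \<bullet> (H_SCI PA QA PB QB w *v x)) has_real_derivative x \<bullet> (H_SCI' PA QA PB QB w *v x)) (at w)"
    if "0 \<le> w" "w \<le> 1" for w
    by (rule h_deriv[OF pA pB qA qB that])
  have kkt: "g_fun PA QA PB QB x = x \<bullet> (H_SCI PA QA PB QB w *v x)"
    if w: "0 \<le> w" "w \<le> 1" and k1: "0 < w \<longrightarrow> 0 \<le> x \<bullet> (H_SCI' PA QA PB QB w *v x)"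
      and k2: "w < 1 \<longrightarrow> x \<bullet> (H_SCI' PA QA PB QB w *v x) \<le> 0" for w
  proof -
    have k1': "0 < w \<Longrightarrow> b w \<le> a w" using k1 dform[OF w] by simp
    have k2': "w < 1 \<Longrightarrow> a w \<le> b w" using k2 dform[OF w] by simp
    obtain M0 where M0: "M0 \<in> A_Split PA PB"
      "x \<bullet> (M_F_opt (PA + QA) (PB + QB) M0 *v x) = x \<bullet> (H_SCI PA QA PB QB w *v x)"
      using upper_sci[OF pA pB qA qB x0 w] k1' k2' unfolding a_def b_def by blast
    show ?thesis unfolding g_fun_def
    proof (rule cInf_eq_minimum)
      show "x \<bullet> (H_SCI PA QA PB QB w *v x)
          \<in> (\<lambda>PAB. x \<bullet> (M_F_opt (PA + QA) (PB + QB) PAB *v x)) ` A_Split PA PB"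
        using M0 by force
      fix y assume "y \<in> (\<lambda>PAB. x \<bullet> (M_F_opt (PA + QA) (PB + QB) PAB *v x)) ` A_Split PA PB"
      then obtain M where "M \<in> A_Split PA PB" "y = x \<bullet> (M_F_opt (PA + QA) (PB + QB) M *v x)" by blast
      then show "x \<bullet> (H_SCI PA QA PB QB w *v x) \<le> y"
        using lower_sci[OF pA pB qA qB _ w] by blast
    qed
  qed
  show ?thesis
    using tri_abstract[of "\<lambda>w. x \<bullet> (H_SCI' PA QA PB QB w *v x)" "\<lambda>w. x \<bullet> (H_SCI PA QA PB QB w *v x)"
      "g_fun PA QA PB QB x", OF mono der kkt]
    unfolding Let_def by blast
qed

end
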